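(* Let $m,g\geq3$ be odd integers, $n=mg$ and $k=1+(m-1)g$, and let $A$ be a cyclically $k$-diagonal $n\times n$ array. Then there exists a solution to $P(A)$.
   Context: Arrays are partially filled and toroidal; $F(A)$ is the set of filled cells. $s_R(i,j)=(i,j+t)$, $s_C(i,j)=(i+t,j)$ with $t\ge1$ minimal such that the cell is filled. For $R,C\in\{-1,1\}^n$, $CN_{RC}(i,j)=s_C^{c_{j'}}(i,j')$ where $(i,j')=s_R^{r_i}(i,j)$. A solution to $P(A)$ is a pair $R,C$ such that $CN_{RC}$ is a permutation of $F(A)$ forming a single cycle of length $|F(A)|$. An $n\times n$ array is cyclically $k$-diagonal if its filled cells are exactly the $(i,j)$ with $i-j\bmod n\in\{0,\dots,k-1\}$. *)

theory Defs
  imports Main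
begin

text \<open>An n x n toroidal, partially filled array is represented by its set of filled
cells F, a subset of {0..<n} x {0..<n} (0-based indices, arithmetic mod n).\<close>

definition is_array :: "int \<Rightarrow> (int \<times> int) set \<Rightarrow> bool" where
  "is_array n F \<longleftrightarrow> n \<ge> 1 \<and> F \<subseteq> {0..<n} \<times> {0..<n}"

definition row_step :: "int \<Rightarrow> (int \<times> int) set \<Rightarrow> int \<Rightarrow> int \<times> int \<Rightarrow> int \<times> int" where
  "row_step n F d c = (let i = fst c; j = snd c;
      t = (LEAST t::nat. t \<ge> 1 \<and> (i, (j + d * int t) mod n) \<in> F)
    in (i, (j + d * int t) mod n))"

definition col_step :: "int \<Rightarrow> (int \<times> int) set \<Rightarrow> int \<Rightarrow> int \<times> int \<Rightarrow> int \<times> int" where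
  "col_step n F d c = (let i = fst c; j = snd c;
      t = (LEAST t::nat. t \<ge> 1 \<and> ((i + d * int t) mod n, j) \<in> F)
    in ((i + d * int t) mod n, j))"

definition CN :: "int \<Rightarrow> (int \<times> int) set \<Rightarrow> (int \<Rightarrow> int) \<Rightarrow> (int \<Rightarrow> int) \<Rightarrow> int \<times> int \<Rightarrow> int \<times> int" where
  "CN n F R C c = (let c' = row_step n F (R (fst c)) c in col_step n F (C (snd c')) c')"

definition is_solution :: "int \<Rightarrow> (int \<times> int) set \<Rightarrow> (int \<Rightarrow> int) \<Rightarrow> (int \<Rightarrow> int) \<Rightarrow> bool" where
  "is_solution n F R C \<longleftrightarrow>
     (\<forall>i\<in>{0..<n}. R i \<in> {-1, 1}) \<and> (\<forall>j\<in>{0..<n}. C j \<in> {-1, 1}) \<and>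
     bij_betw (CN n F R C) F F \<and>
     (\<forall>x\<in>F. \<forall>y\<in>F. \<exists>t::nat. (CN n F R C ^^ t) x = y)"

definition cyclically_k_diagonal :: "int \<Rightarrow> int \<Rightarrow> (int \<times> int) set \<Rightarrow> bool" where
  "cyclically_k_diagonal n k F \<longleftrightarrow>
     F = {(i, j). 0 \<le> i \<and> i < n \<and> 0 \<le> j \<and> j < n \<and> (i - j) mod n \<in> {0..<k}}"

end

theory Submission
  imports Defs
begin


lemma int_range_induct:
  fixes a b c :: int
  assumes "P a" "\<And>c. a \<le> c \<Longrightarrow> c < b \<Longrightarrow> P c \<Longrightarrow> P (c+1)" "a \<le> c" "c \<le> b"
  shows "P c"
proof -
  have "c \<le> b \<longrightarrow> P c" using assms(3)
  proof (induction c rule: int_ge_induct)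
    case base then show ?case using assms(1) by simp
  next
    case (step i) then show ?case using assms(2) by simp
  qed
  then show ?thesis using assms(4) by simp
qed

locale ckd =
  fixes n g k :: int
  assumes g3: "g \<ge> 3" and gk: "2*g+1 \<le> k" and og: "odd g" and ok: "odd k" and nkg: "n = k + g - 1"
begin

definition redir :: "int \<Rightarrow> int \<Rightarrow> bool" where
 "redir c r \<longleftrightarrow> (0 \<le> c \<and> c \<le> k-1 \<and> r = k-1-c) \<or> (g \<le> c \<and> c \<le> n-1 \<and> r = n-c) \<or> (c = 0 \<and> r = 0)"

definition nx :: "int \<times> int \<Rightarrow> int \<times> int" where
 "nx x = (if redir (fst x) (snd x) then (if snd x = 0 then ((fst x + g) mod n, 0) else ((fst x + 1) mod n, snd x)) else (fst x, (snd x + 1) mod k))"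

definition reach :: "int \<times> int \<Rightarrow> int \<times> int \<Rightarrow> bool" where
 "reach x y \<longleftrightarrow> (\<exists>t. (nx ^^ t) x = y)"

lemma reach_refl: "reach x x"
  unfolding reach_def by (rule exI[of _ 0]) simp

lemma reach_trans: "reach x y \<Longrightarrow> reach y z \<Longrightarrow> reach x z"
  unfolding reach_def
proof (elim exE)
  fix a b assume "(nx ^^ a) x = y" "(nx ^^ b) y = z"
  then have "(nx ^^ (b + a)) x = z" by (simp add: funpow_add)
  then show "\<exists>t. (nx ^^ t) x = z" by blast
qed

lemma reach_next: "reach x y \<Longrightarrow> reach x (nx y)"
  unfolding reach_def
proof (elim exE)
  fix a assume "(nx ^^ a) x = y"
  then have "(nx ^^ (Suc a)) x = nx y" by simp
  then show "\<exists>t. (nx ^^ t) x = nx y" by blast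
qed

lemma walk_aux:
  "\<forall>q. 0 \<le> p \<longrightarrow> q = p + int d \<longrightarrow> q < k \<longrightarrow> (\<forall>r. p \<le> r \<and> r < q \<longrightarrow> \<not> redir c r) \<longrightarrow> reach (c,p) (c,q)"
proof (induction d)
  case 0 then show ?case by (simp add: reach_refl)
next
  case (Suc d)
  show ?case
  proof (intro allI impI)
    fix q assume h: "0 \<le> p" "q = p + int (Suc d)" "q < k" "\<forall>r. p \<le> r \<and> r < q \<longrightarrow> \<not> redir c r"
    have "reach (c,p) (c, q-1)" using Suc.IH h by auto
    then have "reach (c,p) (nx (c, q-1))" by (rule reach_next)
    moreover have "\<not> redir c (q-1)" using h by auto
    then have "nx (c, q-1) = (c, q)" using h by (simp add: nx_def)
    ultimately show "reach (c,p) (c,q)" by simp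
  qed
qed

lemma walk:
  assumes "0 \<le> p" "p \<le> q" "q < k" "\<And>r. p \<le> r \<Longrightarrow> r < q \<Longrightarrow> \<not> redir c r"
  shows "reach (c,p) (c,q)"
  using walk_aux[of p "nat (q-p)" c] assms by auto

lemma wrap: "\<not> redir c (k-1) \<Longrightarrow> nx (c, k-1) = (c, 0)"
  by (simp add: nx_def)

lemma redir_step: "redir c x \<Longrightarrow> x \<noteq> 0 \<Longrightarrow> nx (c, x) = ((c+1) mod n, x)"
  by (simp add: nx_def)

lemma redir_step0: "redir c 0 \<Longrightarrow> nx (c, 0) = ((c+g) mod n, 0)"
  by (simp add: nx_def)

lemma seg_nowrap:
  assumes "reach S (c,e)" "0 \<le> e" "e \<le> x" "x < k" "\<And>r. e \<le> r \<Longrightarrow> r < x \<Longrightarrow> \<not> redir c r"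
    "e \<le> q" "q \<le> x"
  shows "reach S (c,q)"
  using reach_trans[OF assms(1) walk[of e q c]] assms by auto

lemma seg_wrap:
  assumes "reach S (c,e)" "0 \<le> x" "x < e" "e < k"
    "\<And>r. e \<le> r \<Longrightarrow> r < k \<Longrightarrow> \<not> redir c r" "\<And>r. 0 \<le> r \<Longrightarrow> r < x \<Longrightarrow> \<not> redir c r"
    "(e \<le> q \<and> q < k) \<or> (0 \<le> q \<and> q \<le> x)"
  shows "reach S (c,q)"
proof -
  have r1: "reach S (c, k-1)" using seg_nowrap[OF assms(1), of "k-1" "k-1"] assms by auto
  have "reach S (nx (c, k-1))" using reach_next[OF r1] .
  then have r0: "reach S (c, 0)" using wrap assms(5)[of "k-1"] assms by auto
  show ?thesis
  proof (cases "e \<le> q \<and> q < k")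
    case True then show ?thesis using seg_nowrap[OF assms(1), of "k-1" q] assms by auto
  next
    case False then show ?thesis using seg_nowrap[OF r0, of x q] assms by auto
  qed
qed

lemma nle: "n \<le> k+g-1" using nkg by simp
lemma nge: "k+g-1 \<le> n" using nkg by simp

definition S0 :: "int \<times> int" where "S0 = (g, 0)"

definition e1 :: "int \<Rightarrow> int" where
  "e1 c = (if even (c-g) then (if c = g then 0 else n-c+1) else k-c)"
definition x1 :: "int \<Rightarrow> int" where
  "x1 c = (if even (c-g) then k-1-c else n-c)"

lemma par_step: "even (c + 1 - g) \<longleftrightarrow> \<not> even (c - g)"
  by presburger

lemma kg_odd: "odd (k - 1 - g)"
  using ok og by presburger

lemma pass1_exit:
  assumes "g \<le> c" "c \<le> k-1" "reach S0 (c, e1 c)"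
  shows "reach S0 (c, x1 c)"
proof (cases "even (c-g)")
  case True
  show ?thesis
  proof (cases "c = g")
    case True
    then have e: "e1 c = 0" "x1 c = k-1-g" using \<open>even (c-g)\<close> by (auto simp: e1_def x1_def)
    show ?thesis
      apply (rule seg_nowrap[OF assms(3), of "x1 c" "x1 c"])
      unfolding e redir_def using True g3 gk nkg by (auto simp: redir_def)
  next
    case False
    have "c \<noteq> k - 1" using True kg_odd by auto
    then have e: "e1 c = n-c+1" "x1 c = k-1-c" using \<open>even (c-g)\<close> False by (auto simp: e1_def x1_def)
    have "c \<ge> g+1" using False assms by simp
    show ?thesis
      apply (rule seg_wrap[OF assms(3), of "x1 c" "x1 c"])
      unfolding e redir_def using False assms \<open>c \<noteq> k-1\<close> \<open>c \<ge> g+1\<close> g3 gk nkg by (auto simp: redir_def)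
  qed
next
  case False
  then have e: "e1 c = k-c" "x1 c = n-c" by (auto simp: e1_def x1_def)
  show ?thesis
    apply (rule seg_nowrap[OF assms(3), of "x1 c" "x1 c"])
    unfolding e redir_def using assms g3 gk nkg by (auto simp: redir_def)
qed


lemma pass1_all:
  assumes "g \<le> c" "c \<le> k-1"
  shows "reach S0 (c, e1 c)"
  using assms(1) assms
proof (induction c rule: int_ge_induct)
  case base
  have "e1 g = 0" by (simp add: e1_def)
  then show ?case by (simp add: S0_def reach_refl)
next
  case (step c)
  have hc: "reach S0 (c, e1 c)" using step by simp
  have r: "reach S0 (c, x1 c)" using pass1_exit[OF step(1) _ hc] step by simp
  have rd: "redir c (x1 c)" "x1 c \<noteq> 0" using step g3 gk nle nge by (auto simp: x1_def redir_def)
  have "nx (c, x1 c) = ((c+1) mod n, x1 c)" using redir_step[OF rd] .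
  moreover have "(c+1) mod n = c+1" using step g3 gk nle nge by simp
  moreover have "x1 c = e1 (c+1)"
    using par_step[of c] step by (auto simp: x1_def e1_def)
  ultimately show ?case using reach_next[OF r] by simp
qed

lemma after_pass1: "reach S0 (k, g)"
proof -
  have "g < k" using gk g3 by simp
  then have h: "reach S0 (k-1, x1 (k-1))" using pass1_exit[of "k-1"] pass1_all[of "k-1"] by simp
  have x: "x1 (k-1) = g" unfolding x1_def using kg_odd nkg by simp
  have rd: "redir (k-1) g" "g \<noteq> 0" using g3 gk nle nge by (auto simp: redir_def)
  have "nx (k-1, g) = ((k-1+1) mod n, g)" using redir_step[OF rd] .
  moreover have "(k-1+1) mod n = k" using g3 gk nle nge by simp
  ultimately show ?thesis using reach_next[OF h] x by simp
qed

lemma regB_all: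
  assumes "k \<le> c" "c \<le> n-1"
  shows "reach S0 (c, n-c+1)"
  using assms(1) assms
proof (induction c rule: int_ge_induct)
  case base
  then show ?case using after_pass1 nkg by simp
next
  case (step c)
  have hc: "reach S0 (c, n-c+1)" using step by simp
  have r: "reach S0 (c, n-c)"
    apply (rule seg_wrap[OF hc, of "n-c" "n-c"])
    unfolding redir_def using step g3 gk nle nge by auto
  have rd: "redir c (n-c)" "n-c \<noteq> 0" using step g3 gk nle nge by (auto simp: redir_def)
  have "nx (c, n-c) = ((c+1) mod n, n-c)" using redir_step[OF rd] .
  moreover have "(c+1) mod n = c+1" using step g3 gk nle nge by simp
  ultimately show ?case using reach_next[OF r] by simp
qed

lemma regB_cov:
  assumes "k \<le> c" "c \<le> n-1" "0 \<le> q" "q < k"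
  shows "reach S0 (c, q)"
  apply (rule seg_wrap[OF regB_all[OF assms(1,2)], of "n-c" q])
  unfolding redir_def using assms g3 gk nle nge by auto

lemma orb0_start: "reach S0 (0, 1)"
proof -
  have h: "reach S0 (n-1, n-(n-1)+1)" using regB_all[of "n-1"] g3 gk nle nge by simp
  have r: "reach S0 (n-1, 1)"
    apply (rule seg_wrap[OF h, of 1 1])
    unfolding redir_def using g3 gk nle nge by auto
  have rd: "redir (n-1) 1" "(1::int) \<noteq> 0" using g3 gk nle nge by (auto simp: redir_def)
  have "nx (n-1, 1) = ((n-1+1) mod n, 1)" using redir_step[OF rd] .
  then show ?thesis using reach_next[OF r] by simp
qed

lemma orb0_cov: "1 \<le> q \<Longrightarrow> q \<le> k-1 \<Longrightarrow> reach S0 (0, q)"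
  apply (rule seg_nowrap[OF orb0_start, of "k-1" q])
  unfolding redir_def using g3 gk nle nge by auto

lemma regC_all:
  assumes "1 \<le> c" "c \<le> g"
  shows "reach S0 (c, k-c)"
  using assms(1) assms
proof (induction c rule: int_ge_induct)
  case base
  have h: "reach S0 (0, k-1)" using orb0_cov[of "k-1"] gk g3 by simp
  have rd: "redir 0 (k-1)" "k-1 \<noteq> 0" using g3 gk nle nge by (auto simp: redir_def)
  have "nx (0, k-1) = ((0+1) mod n, k-1)" using redir_step[OF rd] .
  moreover have "(0+1) mod n = (1::int)" using g3 gk nle nge by simp
  ultimately show ?case using reach_next[OF h] by simp
next
  case (step c)
  have hc: "reach S0 (c, k-c)" using step by simp
  have r: "reach S0 (c, k-1-c)"
    apply (rule seg_wrap[OF hc, of "k-1-c" "k-1-c"])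
    unfolding redir_def using step g3 gk nle nge by auto
  have rd: "redir c (k-1-c)" "k-1-c \<noteq> 0" using step g3 gk nle nge by (auto simp: redir_def)
  have "nx (c, k-1-c) = ((c+1) mod n, k-1-c)" using redir_step[OF rd] .
  moreover have "(c+1) mod n = c+1" using step g3 gk nle nge by simp
  ultimately have "reach S0 (c+1, k-1-c)" using reach_next[OF r] by simp
  then show ?case by (simp add: algebra_simps)
qed

lemma regC_cov:
  assumes "1 \<le> c" "c \<le> g-1" "0 \<le> q" "q < k"
  shows "reach S0 (c, q)"
  apply (rule seg_wrap[OF regC_all[of c], of "k-1-c" q])
  unfolding redir_def using assms g3 gk nle nge by auto

definition e2 :: "int \<Rightarrow> int" where
  "e2 c = (if even (c-g) then k-c else n-c+1)"
definition x2 :: "int \<Rightarrow> int" where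
  "x2 c = (if even (c-g) then n-c else k-1-c)"

lemma pass2_cov:
  assumes "g \<le> c" "c \<le> k-1" "reach S0 (c, e2 c)" "0 \<le> q" "q < k"
    "(even (c-g) \<and> k-c \<le> q \<and> q \<le> n-c) \<or> (odd (c-g) \<and> (n-c+1 \<le> q \<or> q \<le> k-1-c))"
  shows "reach S0 (c, q)"
proof (cases "even (c-g)")
  case True
  then have e: "e2 c = k-c" "x2 c = n-c" by (auto simp: e2_def x2_def)
  show ?thesis
    apply (rule seg_nowrap[OF assms(3), of "x2 c" q])
    unfolding e redir_def using assms True g3 gk nle nge by auto
next
  case False
  then have e: "e2 c = n-c+1" "x2 c = k-1-c" by (auto simp: e2_def x2_def)
  have "c \<noteq> g" using False by auto
  show ?thesis
    apply (rule seg_wrap[OF assms(3), of "x2 c" q])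
    unfolding e redir_def using assms False \<open>c \<noteq> g\<close> g3 gk nle nge by auto
qed

lemma pass2_all:
  assumes "g \<le> c" "c \<le> k-1"
  shows "reach S0 (c, e2 c)"
  using assms(1) assms
proof (induction c rule: int_ge_induct)
  case base
  have "e2 g = k-g" by (simp add: e2_def)
  then show ?case using regC_all[of g] g3 by simp
next
  case (step c)
  have hc: "reach S0 (c, e2 c)" using step by simp
  have r: "reach S0 (c, x2 c)"
    apply (rule pass2_cov[OF _ _ hc])
    using step g3 gk nle nge by (auto simp: x2_def)
  have rd: "redir c (x2 c)" "x2 c \<noteq> 0" using step g3 gk nle nge by (auto simp: x2_def redir_def)
  have "nx (c, x2 c) = ((c+1) mod n, x2 c)" using redir_step[OF rd] .
  moreover have "(c+1) mod n = c+1" using step g3 gk nle nge by simp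
  moreover have "x2 c = e2 (c+1)"
    using par_step[of c] step by (auto simp: x2_def e2_def)
  ultimately show ?case using reach_next[OF r] by simp
qed

lemma close_cycle: "reach S0 (0, 0)"
proof -
  have "g < k" using gk g3 by simp
  then have h: "reach S0 (k-1, e2 (k-1))" using pass2_all[of "k-1"] by simp
  have r: "reach S0 (k-1, 0)"
    apply (rule pass2_cov[OF _ _ h])
    using kg_odd g3 gk nle nge by auto
  have rd: "redir (k-1) 0" using g3 gk nle nge by (auto simp: redir_def)
  have "nx (k-1, 0) = ((k-1+g) mod n, 0)" using redir_step0[OF rd] .
  moreover have "k-1+g = n" using nkg by simp
  then have "(k-1+g) mod n = 0" by simp
  ultimately show ?thesis using reach_next[OF r] by simp
qed

lemma nx00: "nx (0,0) = S0"
proof -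
  have "redir 0 0" by (simp add: redir_def)
  then have "nx (0,0) = ((0+g) mod n, 0)" by (rule redir_step0)
  moreover have "(0+g) mod n = g" using g3 gk nle nge by simp
  ultimately show ?thesis by (simp add: S0_def)
qed

lemma pass_cov:
  assumes "g \<le> c" "c \<le> k-1" "0 \<le> q" "q < k"
  shows "reach S0 (c, q)"
proof (cases "(even (c-g) \<and> k-c \<le> q \<and> q \<le> n-c) \<or> (odd (c-g) \<and> (n-c+1 \<le> q \<or> q \<le> k-1-c))")
  case True
  then show ?thesis using pass2_cov[OF assms(1,2) pass2_all[OF assms(1,2)] assms(3,4)] by simp
next
  case False
  have hc: "reach S0 (c, e1 c)" using pass1_all[OF assms(1,2)] .
  show ?thesis
  proof (cases "even (c-g)")
    case True
    show ?thesis
    proof (cases "c = g")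
      case True
      then have e: "e1 c = 0" "x1 c = k-1-g" using \<open>even (c-g)\<close> by (auto simp: e1_def x1_def)
      show ?thesis
        apply (rule seg_nowrap[OF hc, of "x1 c" q])
        unfolding e redir_def using True False assms g3 gk nle nge by auto
    next
      case False2: False
      have "c \<noteq> k - 1" using True kg_odd by auto
      then have e: "e1 c = n-c+1" "x1 c = k-1-c" using True False2 by (auto simp: e1_def x1_def)
      show ?thesis
        apply (rule seg_wrap[OF hc, of "x1 c" q])
        unfolding e redir_def using True False False2 assms \<open>c \<noteq> k-1\<close> g3 gk nle nge by auto
    qed
  next
    case odd: False
    then have e: "e1 c = k-c" "x1 c = n-c" by (auto simp: e1_def x1_def)
    show ?thesis
      apply (rule seg_nowrap[OF hc, of "x1 c" q])
      unfolding e redir_def using odd False assms g3 gk nle nge by auto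
  qed
qed

lemma all_reach:
  assumes "0 \<le> c" "c < n" "0 \<le> q" "q < k"
  shows "reach S0 (c, q)"
proof -
  consider "c = 0" | "1 \<le> c \<and> c \<le> g-1" | "g \<le> c \<and> c \<le> k-1" | "k \<le> c \<and> c \<le> n-1"
    using assms by linarith
  then show ?thesis
  proof cases
    case 1
    then show ?thesis using orb0_cov[of q] close_cycle assms by (cases "q = 0") auto
  next
    case 2 then show ?thesis using regC_cov assms by auto
  next
    case 3 then show ?thesis using pass_cov assms by auto
  next
    case 4 then show ?thesis using regB_cov assms by auto
  qed
qed

end


lemma least1:
  assumes "1 \<le> t0" "P t0" "\<And>t. 1 \<le> t \<Longrightarrow> t < t0 \<Longrightarrow> \<not> P t"
  shows "(LEAST t::nat. 1 \<le> t \<and> P t) = t0"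
  apply (rule Least_equality)
  using assms not_less by auto

lemma mod_neg_small: "0 < (t::int) \<Longrightarrow> t < n \<Longrightarrow> (- t) mod n = n - t"
  by (simp add: zmod_zminus1_eq_if)

lemma mod_big: "(n::int) \<le> x \<Longrightarrow> x < 2*n \<Longrightarrow> x mod n = x - n"
proof -
  assume a: "n \<le> x" "x < 2*n"
  have "x mod n = ((x - n) + n) mod n" by simp
  also have "\<dots> = (x - n) mod n" by (rule mod_add_self2)
  also have "\<dots> = x - n" using a by (intro mod_pos_pos_trivial) auto
  finally show ?thesis .
qed

lemma funpow_fix_mult: "(f ^^ Suc P) x0 = x0 \<Longrightarrow> (f ^^ (Suc P * j)) x0 = x0"
proof (induction j)
  case 0 then show ?case by simp
next
  case (Suc j)
  have e: "Suc P * Suc j = Suc P + Suc P * j" by simp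
  have "(f ^^ (Suc P * Suc j)) x0 = (f ^^ Suc P) ((f ^^ (Suc P * j)) x0)"
    by (simp only: e funpow_add comp_apply)
  also have "\<dots> = (f ^^ Suc P) x0" using Suc.IH Suc.prems by (simp only:)
  also have "\<dots> = x0" using Suc.prems by (simp only:)
  finally show ?case .
qed

lemma funpow_closed: "(\<forall>x\<in>F. f x \<in> F) \<Longrightarrow> x \<in> F \<Longrightarrow> (f ^^ t) x \<in> F"
  by (induction t) auto

lemma trans_from_base:
  assumes fin: "finite F" and cl: "\<forall>x\<in>F. f x \<in> F" and x0: "x0 \<in> F"
    and all: "\<forall>y\<in>F. \<exists>t. (f ^^ t) x0 = y" and per: "(f ^^ Suc P) x0 = x0"
  shows "bij_betw f F F \<and> (\<forall>x\<in>F. \<forall>y\<in>F. \<exists>t. (f ^^ t) x = y)"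
proof -
  have bk: "\<exists>s. (f ^^ s) x = x0" if xF: "x \<in> F" for x
  proof -
    obtain a where a: "(f ^^ a) x0 = x" using bspec[OF all xF] by blast
    define s where "s = Suc P * Suc a - a"
    have sa: "s + a = Suc P * Suc a" unfolding s_def by simp
    have "(f ^^ (Suc P * Suc a)) x0 = (f ^^ (s + a)) x0" by (simp only: sa)
    also have "\<dots> = (f ^^ s) ((f ^^ a) x0)" by (simp only: funpow_add comp_apply)
    also have "\<dots> = (f ^^ s) x" by (simp only: a)
    finally have "(f ^^ s) x = x0" using funpow_fix_mult[OF per] by (simp only:)
    then show ?thesis by blast
  qed
  have tr: "\<forall>x\<in>F. \<forall>y\<in>F. \<exists>t. (f ^^ t) x = y"
  proof (intro ballI)
    fix x y assume "x \<in> F" "y \<in> F"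
    obtain s where s: "(f ^^ s) x = x0" using bk \<open>x \<in> F\<close> by blast
    obtain b where b: "(f ^^ b) x0 = y" using all \<open>y \<in> F\<close> by blast
    have "(f ^^ (b + s)) x = (f ^^ b) ((f ^^ s) x)" by (simp only: funpow_add comp_apply)
    then have "(f ^^ (b + s)) x = y" using s b by simp
    then show "\<exists>t. (f ^^ t) x = y" by blast
  qed
  have im: "f ` F = F"
  proof
    show "f ` F \<subseteq> F" using cl by auto
    show "F \<subseteq> f ` F"
    proof
      fix y assume y: "y \<in> F"
      have fy: "f y \<in> F" using cl y by blast
      obtain t where t: "(f ^^ t) (f y) = y" using tr y fy by blast
      have "f ((f ^^ t) y) = y" using t by (simp only: funpow_swap1)
      moreover have "(f ^^ t) y \<in> F" using funpow_closed[OF cl y] .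
      ultimately show "y \<in> f ` F" by (metis imageI)
    qed
  qed
  have "inj_on f F" by (rule eq_card_imp_inj_on[OF fin]) (simp add: im)
  then show ?thesis using im tr by (simp add: bij_betw_def)
qed
context ckd begin

lemma npos: "n > 0" using nkg gk g3 by simp
lemma kn: "k < n" using nkg g3 by simp

definition F0 :: "(int \<times> int) set" where
  "F0 = {(i, j). 0 \<le> i \<and> i < n \<and> 0 \<le> j \<and> j < n \<and> (i - j) mod n \<in> {0..<k}}"

lemma inF0: "(a,b) \<in> F0 \<longleftrightarrow> 0 \<le> a \<and> a < n \<and> 0 \<le> b \<and> b < n \<and> (a - b) mod n < k"
  unfolding F0_def using npos by auto

lemma lev_right: "(a - (b + t) mod n) mod n = ((a - b) mod n - t) mod n"
  by (simp add: mod_diff_right_eq mod_diff_left_eq algebra_simps)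

lemma lev_up: "((a + t) mod n - b) mod n = ((a - b) mod n + t) mod n"
proof -
  have "((a + t) mod n - b) mod n = (a + t - b) mod n" by (rule mod_diff_left_eq)
  moreover have "((a - b) mod n + t) mod n = ((a - b) + t) mod n" by (rule mod_add_left_eq)
  ultimately show ?thesis by (simp add: algebra_simps)
qed

lemma row1:
  assumes "(I,J) \<in> F0"
  shows "row_step n F0 1 (I,J) = (I, (J + (if (I-J) mod n = 0 then g else 1)) mod n)"
proof -
  define e where "e = (I-J) mod n"
  have e0: "0 \<le> e" "e < k" using assms npos by (auto simp: inF0 e_def)
  define s where "s = (if e = 0 then g else 1)"
  have sint: "int (nat s) = s" using g3 by (simp add: s_def)
  have mg: "(- g) mod n = n - g" by (rule mod_neg_small) (use g3 kn nkg gk in auto)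
  have P: "\<And>t::nat. (I, (J + int t) mod n) \<in> F0 \<longleftrightarrow> (e - int t) mod n < k"
    using assms npos by (auto simp: inF0 lev_right e_def)
  have L: "(LEAST t::nat. 1 \<le> t \<and> (I, (J + int t) mod n) \<in> F0) = nat s"
  proof (rule least1)
    show "1 \<le> nat s" using g3 by (simp add: s_def le_nat_iff)
    show "(I, (J + int (nat s)) mod n) \<in> F0"
    proof (cases "e = 0")
      case True
      then have "(e - int (nat s)) mod n = n - g" using mg sint by (simp add: s_def)
      moreover have "n - g < k" using nkg by simp
      ultimately show ?thesis using P[of "nat s"] by simp
    next
      case False
      then have "(e - int (nat s)) mod n = e - 1" using e0 kn by (simp add: s_def)
      then show ?thesis using P[of "nat s"] e0 by simp
    qed
    fix t :: nat assume t: "1 \<le> t" "t < nat s"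
    then have "e = 0" "int t < g" by (auto simp: s_def split: if_splits)
    have tn: "int t < n" using \<open>int t < g\<close> gk g3 nkg by linarith
    have "(- int t) mod n = n - int t" by (rule mod_neg_small) (use t tn in auto)
    then have "(e - int t) mod n = n - int t" using \<open>e = 0\<close> by simp
    then show "(I, (J + int t) mod n) \<notin> F0" using P \<open>int t < g\<close> nkg by simp
  qed
  have "int (nat s) = s" using g3 by (simp add: s_def)
  then show ?thesis unfolding row_step_def Let_def using L by (simp add: s_def e_def)
qed

lemma colp:
  assumes "(I,J) \<in> F0"
  shows "col_step n F0 1 (I,J) = ((I + (if (I-J) mod n = k-1 then g else 1)) mod n, J)"
proof -
  define e where "e = (I-J) mod n"
  have e0: "0 \<le> e" "e < k" using assms npos by (auto simp: inF0 e_def)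
  define s where "s = (if e = k-1 then g else 1)"
  have sint: "int (nat s) = s" using g3 by (simp add: s_def)
  have P: "\<And>t::nat. ((I + int t) mod n, J) \<in> F0 \<longleftrightarrow> (e + int t) mod n < k"
    using assms npos by (auto simp: inF0 lev_up e_def)
  have L: "(LEAST t::nat. 1 \<le> t \<and> ((I + int t) mod n, J) \<in> F0) = nat s"
  proof (rule least1)
    show "1 \<le> nat s" using g3 by (simp add: s_def le_nat_iff)
    show "((I + int (nat s)) mod n, J) \<in> F0"
    proof (cases "e = k-1")
      case True
      then have "e + int (nat s) = n" using sint nkg by (simp add: s_def)
      then have "(e + int (nat s)) mod n = 0" by simp
      then show ?thesis using P[of "nat s"] gk g3 by simp
    next
      case False
      then have "(e + int (nat s)) mod n = e + 1" using e0 kn by (simp add: s_def)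
      then show ?thesis using P[of "nat s"] e0 False by simp
    qed
    fix t :: nat assume t: "1 \<le> t" "t < nat s"
    then have "e = k-1" "int t < g" by (auto simp: s_def split: if_splits)
    then have "0 \<le> e + int t" "e + int t < n" using e0 nkg by auto
    then have "(e + int t) mod n = e + int t" by simp
    then show "((I + int t) mod n, J) \<notin> F0" using P \<open>e = k-1\<close> t by simp
  qed
  have "int (nat s) = s" using g3 by (simp add: s_def)
  then show ?thesis unfolding col_step_def Let_def using L by (simp add: s_def e_def)
qed

lemma colm:
  assumes "(I,J) \<in> F0"
  shows "col_step n F0 (-1) (I,J) = ((I - (if (I-J) mod n = 0 then g else 1)) mod n, J)"
proof -
  define e where "e = (I-J) mod n"
  have e0: "0 \<le> e" "e < k" using assms npos by (auto simp: inF0 e_def)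
  define s where "s = (if e = 0 then g else 1)"
  have sint: "int (nat s) = s" using g3 by (simp add: s_def)
  have mg: "(- g) mod n = n - g" by (rule mod_neg_small) (use g3 kn nkg gk in auto)
  have P: "\<And>t::nat. ((I + - 1 * int t) mod n, J) \<in> F0 \<longleftrightarrow> (e - int t) mod n < k"
    using assms npos lev_up[of I "- int t" J for t] by (auto simp: inF0 e_def)
  have L: "(LEAST t::nat. 1 \<le> t \<and> ((I + - 1 * int t) mod n, J) \<in> F0) = nat s"
  proof (rule least1)
    show "1 \<le> nat s" using g3 by (simp add: s_def le_nat_iff)
    show "((I + - 1 * int (nat s)) mod n, J) \<in> F0"
    proof (cases "e = 0")
      case True
      then have "(e - int (nat s)) mod n = n - g" using mg sint by (simp add: s_def)
      moreover have "n - g < k" using nkg by simp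
      ultimately show ?thesis using P[of "nat s"] by simp
    next
      case False
      then have "(e - int (nat s)) mod n = e - 1" using e0 kn by (simp add: s_def)
      then show ?thesis using P[of "nat s"] e0 by simp
    qed
    fix t :: nat assume t: "1 \<le> t" "t < nat s"
    then have "e = 0" "int t < g" by (auto simp: s_def split: if_splits)
    have tn: "int t < n" using \<open>int t < g\<close> gk g3 nkg by linarith
    have "(- int t) mod n = n - int t" by (rule mod_neg_small) (use t tn in auto)
    then have "(e - int t) mod n = n - int t" using \<open>e = 0\<close> by simp
    then show "((I + - 1 * int t) mod n, J) \<notin> F0" using P \<open>int t < g\<close> nkg by simp
  qed
  have "int (nat s) = s" using g3 by (simp add: s_def)
  then show ?thesis unfolding col_step_def Let_def using L by (simp add: s_def e_def)
qed


lemma mod2: "0 \<le> x \<Longrightarrow> x < 2*n \<Longrightarrow> x mod n = (if x < n then x else x - n)"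
  using mod_big[of n x] by auto

lemma modn_cn: "x = c + n \<Longrightarrow> 0 \<le> c \<Longrightarrow> c < n \<Longrightarrow> x mod n = c"
  by simp

definition colf :: "int \<Rightarrow> int \<Rightarrow> int" where
  "colf c p = (if p = 0 then c else c + g + p - 1) mod n"
definition levf :: "int \<Rightarrow> int" where
  "levf p = (- 2 * p) mod k"
definition cell :: "int \<times> int \<Rightarrow> int \<times> int" where
  "cell x = ((colf (fst x) (snd x) + levf (snd x)) mod n, colf (fst x) (snd x))"

definition Rf :: "int \<Rightarrow> int" where "Rf i = 1"
definition Cf :: "int \<Rightarrow> int" where "Cf j = (if j = 0 \<or> j = g then 1 else -1)"

lemma colf_bd: "0 \<le> colf c p" "colf c p < n"
  unfolding colf_def using npos by auto

lemma levf_bd: "0 \<le> levf p" "levf p < k"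
  unfolding levf_def using gk g3 by auto

lemma k_dvd: "k dvd 2 * p \<Longrightarrow> k dvd p"
proof -
  assume a: "k dvd 2 * p"
  have "coprime k 2" using ok by simp
  then show "k dvd p" using a by (simp add: coprime_dvd_mult_right_iff)
qed

lemma levf0: "0 \<le> p \<Longrightarrow> p < k \<Longrightarrow> levf p = 0 \<longleftrightarrow> p = 0"
proof
  assume a: "0 \<le> p" "p < k" "levf p = 0"
  then have "k dvd (- 2 * p)" unfolding levf_def by (simp add: mod_eq_0_iff_dvd)
  then have "k dvd 2 * p" by simp
  then have "k dvd p" by (rule k_dvd)
  then show "p = 0" using a by (cases "p = 0") (auto dest: zdvd_imp_le)
qed (simp add: levf_def)

lemma colnext:
  assumes "0 \<le> c" "c < n" "0 \<le> p" "p < k"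
  shows "colf c ((p+1) mod k) = (colf c p + (if p = 0 then g else 1)) mod n"
proof (cases "p = 0")
  case True
  have "(p+1) mod k = 1" using True gk g3 by simp
  then show ?thesis using True assms by (simp add: colf_def)
next
  case False
  show ?thesis
  proof (cases "p + 1 < k")
    case True
    then have "(p+1) mod k = p+1" using assms by simp
    then show ?thesis using False assms by (simp add: colf_def mod_add_left_eq add.assoc)
  next
    case False2: False
    then have pk: "p = k-1" using assms by simp
    then have "(p+1) mod k = 0" by simp
    then have "colf c ((p+1) mod k) = c" using assms by (simp add: colf_def)
    moreover have "(colf c p + 1) mod n = (c + g + p - 1 + 1) mod n" using False by (simp add: colf_def mod_add_left_eq)
    moreover have "(c + g + p - 1 + 1) mod n = c" by (rule modn_cn) (use pk nkg assms in auto)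
    ultimately show ?thesis using False assms by simp
  qed
qed

lemma levnext: "levf ((p+1) mod k) = (levf p - 2) mod k"
proof -
  have "levf ((p+1) mod k) = (- 2 * (p + 1)) mod k" unfolding levf_def by (metis mod_mult_right_eq)
  also have "\<dots> = (- 2 * p - 2) mod k" by (rule arg_cong[where f="\<lambda>x. x mod k"]) simp
  also have "\<dots> = (levf p - 2) mod k" unfolding levf_def by (simp add: mod_diff_left_eq)
  finally show ?thesis .
qed

lemma col_redir:
  assumes "0 \<le> c" "c < n" "0 \<le> p" "p < k"
  shows "(colf c ((p+1) mod k) = 0 \<or> colf c ((p+1) mod k) = g) \<longleftrightarrow> redir c p"
proof (cases "p + 1 < k")
  case True
  then have "(p+1) mod k = p+1" using assms by simp
  then have "colf c ((p+1) mod k) = (c + g + p) mod n" using assms by (simp add: colf_def ac_simps)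
  also have "\<dots> = (if c + g + p < n then c + g + p else c + g + p - n)"
    by (rule mod2) (use assms g3 gk nkg True in auto)
  finally show ?thesis unfolding redir_def using assms True g3 gk nkg by auto
next
  case False
  then have pk: "p = k-1" using assms by simp
  then have "colf c ((p+1) mod k) = c" using assms by (simp add: colf_def)
  then show ?thesis unfolding redir_def using assms pk g3 gk nkg by auto
qed

lemma colshift:
  assumes "0 \<le> c" "c < n" "0 \<le> p" "p < k" "p \<noteq> 0"
  shows "colf ((c+1) mod n) p = colf c ((p+1) mod k)"
proof -
  have "((c+1) mod n + (g + p - 1)) mod n = (c + 1 + (g + p - 1)) mod n" by (rule mod_add_left_eq)
  then have a: "colf ((c+1) mod n) p = (c + g + p) mod n" using assms by (simp add: colf_def algebra_simps)
  show ?thesis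
  proof (cases "p + 1 < k")
    case True
    then have "(p+1) mod k = p+1" using assms by simp
    then show ?thesis using a assms by (simp add: colf_def add.assoc)
  next
    case False
    then have pk: "p = k-1" using assms by simp
    then have "colf c ((p+1) mod k) = c" using assms by (simp add: colf_def)
    moreover have "(c + g + p) mod n = c" by (rule modn_cn) (use pk nkg assms in auto)
    ultimately show ?thesis using a by simp
  qed
qed

lemma colshift0:
  assumes "0 \<le> c" "c < n"
  shows "colf ((c+g) mod n) 0 = colf c ((0+1) mod k)"
proof -
  have "(0+1) mod k = (1::int)" using gk g3 by simp
  then show ?thesis by (simp add: colf_def)
qed

lemma pair_lev: "0 \<le> a \<Longrightarrow> a < n \<Longrightarrow> a = (b + (a - b) mod n) mod n"
proof -
  assume "0 \<le> a" "a < n"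
  have "(b + (a - b) mod n) mod n = (b + (a - b)) mod n" by (rule mod_add_right_eq)
  then show ?thesis using \<open>0 \<le> a\<close> \<open>a < n\<close> by simp
qed

lemma cell_in:
  assumes "0 \<le> c" "c < n" "0 \<le> p" "p < k"
  shows "cell (c,p) \<in> F0" "(fst (cell (c,p)) - snd (cell (c,p))) mod n = levf p"
proof -
  have l: "((colf c p + levf p) mod n - colf c p) mod n = levf p"
    using lev_up[of "colf c p" "levf p" "colf c p"] levf_bd[of p] kn by simp
  then show "(fst (cell (c,p)) - snd (cell (c,p))) mod n = levf p" by (simp add: cell_def)
  show "cell (c,p) \<in> F0" unfolding cell_def using l inF0 colf_bd levf_bd npos by auto
qed


lemma CN_cell:
  assumes c: "0 \<le> c" "c < n" and p: "0 \<le> p" "p < k"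
  shows "CN n F0 Rf Cf (cell (c,p)) = cell (nx (c,p))"
proof -
  define J where "J = colf c p"
  define D where "D = levf p"
  define I where "I = (J + D) mod n"
  have ce: "cell (c,p) = (I, J)" by (simp add: cell_def I_def J_def D_def)
  have IJ: "(I,J) \<in> F0" "(I - J) mod n = D" using cell_in[OF c p] ce by (auto simp: D_def)
  have Dbd: "0 \<le> D" "D < k" using levf_bd by (auto simp: D_def)
  have D0: "D = 0 \<longleftrightarrow> p = 0" using levf0[OF p] by (simp add: D_def)
  define J1 where "J1 = (J + (if D = 0 then g else 1)) mod n"
  have row: "row_step n F0 (Rf I) (I,J) = (I, J1)" using row1[OF IJ(1)] IJ(2) by (simp add: Rf_def J1_def)
  have J1c: "J1 = colf c ((p+1) mod k)" using colnext[OF c p] D0 by (simp add: J1_def J_def)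
  define e1 where "e1 = (if D = 0 then k - 1 else D - 1)"
  have mg: "(- g) mod n = n - g" by (rule mod_neg_small) (use g3 kn nkg gk in auto)
  have e1v: "(I - J1) mod n = e1"
  proof -
    have "(I - J1) mod n = (D - (if D = 0 then g else 1)) mod n"
      using lev_right[of I J "if D = 0 then g else 1"] IJ(2) by (simp add: J1_def)
    then show ?thesis using mg Dbd kn nkg by (auto simp: e1_def)
  qed
  have e1bd: "0 \<le> e1" "e1 < k" using Dbd gk by (auto simp: e1_def)
  have I1: "(I, J1) \<in> F0" using IJ(1) e1v e1bd npos by (auto simp: inF0 J1_def)
  have CN: "CN n F0 Rf Cf (I,J) = col_step n F0 (Cf J1) (I, J1)"
    unfolding CN_def Let_def using row by simp
  have J1bd: "0 \<le> J1" "J1 < n" using npos by (auto simp: J1_def)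
  show ?thesis
  proof (cases "redir c p")
    case True
    then have Cp: "Cf J1 = 1" using col_redir[OF c p] J1c by (auto simp: Cf_def)
    define I2 where "I2 = (I + (if e1 = k-1 then g else 1)) mod n"
    have cs: "col_step n F0 (Cf J1) (I, J1) = (I2, J1)" using colp[OF I1] e1v Cp by (simp add: I2_def)
    have e2: "(I2 - J1) mod n = D"
    proof -
      have "(I2 - J1) mod n = (e1 + (if e1 = k-1 then g else 1)) mod n"
        using lev_up[of I "if e1 = k-1 then g else 1" J1] e1v by (simp add: I2_def)
      moreover have "e1 = k - 1 \<longleftrightarrow> D = 0" using Dbd by (auto simp: e1_def)
      moreover have "(k - 1 + g) mod n = 0" by (rule modn_cn[where c=0, simplified]) (use nkg npos gk in auto)
      ultimately show ?thesis using Dbd kn e1bd by (auto simp: e1_def)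
    qed
    have I2bd: "0 \<le> I2" "I2 < n" using npos by (auto simp: I2_def)
    have nxv: "cell (nx (c,p)) = ((J1 + D) mod n, J1)"
    proof (cases "p = 0")
      case True
      then have "nx (c,p) = ((c+g) mod n, 0)" using \<open>redir c p\<close> by (simp add: nx_def)
      moreover have "colf ((c+g) mod n) 0 = J1" using colshift0[OF c] J1c True by simp
      ultimately show ?thesis using True D0 by (simp add: cell_def D_def)
    next
      case False
      then have "nx (c,p) = ((c+1) mod n, p)" using \<open>redir c p\<close> by (simp add: nx_def)
      moreover have "colf ((c+1) mod n) p = J1" using colshift[OF c p False] J1c by simp
      ultimately show ?thesis by (simp add: cell_def D_def)
    qed
    have "I2 = (J1 + D) mod n" using pair_lev[OF I2bd, of J1] e2 by simp
    then show ?thesis using ce CN cs nxv by simp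
  next
    case False
    then have Cm: "Cf J1 = -1" using col_redir[OF c p] J1c by (auto simp: Cf_def)
    define I2 where "I2 = (I - (if e1 = 0 then g else 1)) mod n"
    have cs: "col_step n F0 (Cf J1) (I, J1) = (I2, J1)" using colm[OF I1] e1v Cm by (simp add: I2_def)
    have e2: "(I2 - J1) mod n = levf ((p+1) mod k)"
    proof -
      have "(I2 - J1) mod n = ((I - J1) mod n - (if e1 = 0 then g else 1)) mod n"
        using lev_up[of I "- (if e1 = 0 then g else 1)" J1] by (simp add: I2_def)
      then have a: "(I2 - J1) mod n = (e1 - (if e1 = 0 then g else 1)) mod n" using e1v by simp
      have b: "levf ((p+1) mod k) = (D - 2) mod k" using levnext by (simp add: D_def)
      consider "D = 0" | "D = 1" | "D \<ge> 2" using Dbd by linarith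
      then show ?thesis
      proof cases
        case 1
        then have "e1 = k - 1" "k - 1 \<noteq> 0" using gk g3 by (auto simp: e1_def)
        moreover have "(-2) mod k = k - 2" using mod_neg_small[of 2 k] gk g3 by simp
        moreover have "(k - 1 - 1) mod n = k - 2" using kn gk g3 by simp
        ultimately show ?thesis using a b 1 by simp
      next
        case 2
        then have "e1 = 0" by (simp add: e1_def)
        moreover have "(-1) mod k = k - 1" using mod_neg_small[of 1 k] gk g3 by simp
        moreover have "n - g = k - 1" using nkg by simp
        ultimately show ?thesis using a b 2 mg by simp
      next
        case 3
        then have "e1 = D - 1" by (simp add: e1_def)
        moreover have "(D - 1 - 1) mod n = D - 2" using 3 Dbd kn by simp
        moreover have "(D - 2) mod k = D - 2" using 3 Dbd by simp
        moreover have "e1 \<noteq> 0" using 3 \<open>e1 = D - 1\<close> by simp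
        ultimately show ?thesis using a b by simp
      qed
    qed
    have I2bd: "0 \<le> I2" "I2 < n" using npos by (auto simp: I2_def)
    have nxv: "nx (c,p) = (c, (p+1) mod k)" using False by (simp add: nx_def)
    have "I2 = (J1 + levf ((p+1) mod k)) mod n" using pair_lev[OF I2bd, of J1] e2 by simp
    then have "cell (nx (c,p)) = (I2, J1)" using nxv J1c by (simp add: cell_def)
    then show ?thesis using ce CN cs by simp
  qed
qed

lemma nx_box:
  assumes "0 \<le> fst x" "fst x < n" "0 \<le> snd x" "snd x < k"
  shows "0 \<le> fst (nx x) \<and> fst (nx x) < n \<and> 0 \<le> snd (nx x) \<and> snd (nx x) < k"
  using assms npos gk g3 by (auto simp: nx_def)

lemma cell_surj:
  assumes "(i,j) \<in> F0"
  shows "\<exists>c p. 0 \<le> c \<and> c < n \<and> 0 \<le> p \<and> p < k \<and> cell (c,p) = (i,j)"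
proof -
  define e where "e = (i - j) mod n"
  have ij: "0 \<le> i" "i < n" "0 \<le> j" "j < n" "0 \<le> e" "e < k" using assms npos by (auto simp: inF0 e_def)
  define h where "h = k div 2 + 1"
  have "2 * (k div 2) + 1 = k" by (rule odd_two_times_div_two_succ[OF ok])
  then have h: "k + 1 = 2 * h" unfolding h_def distrib_left by linarith
  define p where "p = ((k - e) * h) mod k"
  have pbd: "0 \<le> p" "p < k" using gk g3 by (auto simp: p_def)
  have hh: "- 2 * ((k - e) * h) = e + k * (e - k - 1)"
  proof -
    have "- 2 * ((k - e) * h) = - (k - e) * (2 * h)" by (simp add: algebra_simps)
    also have "\<dots> = - (k - e) * (k + 1)" using h by simp
    also have "\<dots> = e + k * (e - k - 1)" by (simp add: algebra_simps)
    finally show ?thesis .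
  qed
  have lev: "levf p = e"
  proof -
    have "levf p = (- 2 * ((k - e) * h)) mod k" unfolding levf_def p_def by (metis mod_mult_right_eq)
    also have "- 2 * ((k - e) * h) = e + k * (e - k - 1)" by (rule hh)
    also have "(e + k * (e - k - 1)) mod k = e mod k" by (rule mod_mult_self2)
    also have "\<dots> = e" using ij by simp
    finally show ?thesis .
  qed
  define c where "c = (if p = 0 then j else (j - g - p + 1) mod n)"
  have cbd: "0 \<le> c" "c < n" using ij npos by (auto simp: c_def)
  have col: "colf c p = j"
  proof (cases "p = 0")
    case True then show ?thesis using ij by (simp add: c_def colf_def)
  next
    case False
    have "((j - g - p + 1) mod n + (g + p - 1)) mod n = (j - g - p + 1 + (g + p - 1)) mod n" by (rule mod_add_left_eq)
    then show ?thesis using False ij by (simp add: c_def colf_def algebra_simps)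
  qed
  have "cell (c,p) = ((j + e) mod n, j)" using col lev by (simp add: cell_def)
  moreover have "(j + e) mod n = i" using pair_lev[of i j] ij by (simp add: e_def)
  ultimately show ?thesis using cbd pbd by blast
qed


lemma transfer:
  assumes "0 \<le> fst x" "fst x < n" "0 \<le> snd x" "snd x < k"
  shows "(CN n F0 Rf Cf ^^ t) (cell x) = cell ((nx ^^ t) x) \<and>
    0 \<le> fst ((nx ^^ t) x) \<and> fst ((nx ^^ t) x) < n \<and> 0 \<le> snd ((nx ^^ t) x) \<and> snd ((nx ^^ t) x) < k"
proof (induction t)
  case 0 then show ?case using assms by simp
next
  case (Suc t)
  obtain c p where cp: "(nx ^^ t) x = (c,p)" by (cases "(nx ^^ t) x") auto
  have b: "0 \<le> c" "c < n" "0 \<le> p" "p < k" using Suc cp by auto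
  have "(CN n F0 Rf Cf ^^ Suc t) (cell x) = CN n F0 Rf Cf (cell (c,p))" using Suc cp by simp
  also have "\<dots> = cell (nx (c,p))" using CN_cell[OF b] .
  finally show ?case using nx_box[of "(c,p)"] b cp by simp
qed

lemma solution: "is_solution n F0 Rf Cf"
proof -
  let ?f = "CN n F0 Rf Cf"
  have fin: "finite F0"
  proof -
    have "F0 \<subseteq> {0..<n} \<times> {0..<n}" by (auto simp: inF0)
    then show ?thesis by (rule finite_subset) simp
  qed
  have cl: "\<forall>x\<in>F0. ?f x \<in> F0"
  proof
    fix y assume "y \<in> F0"
    then obtain c p where cp: "0 \<le> c" "c < n" "0 \<le> p" "p < k" "cell (c,p) = y"
      using cell_surj by (cases y) blast
    then have "?f y = cell (nx (c,p))" using CN_cell by blast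
    moreover obtain c' p' where "nx (c,p) = (c',p')" by (cases "nx (c,p)") auto
    ultimately show "?f y \<in> F0" using nx_box[of "(c,p)"] cp cell_in by auto
  qed
  have x0: "cell (0,0) \<in> F0" using cell_in npos gk g3 by auto
  have all: "\<forall>y\<in>F0. \<exists>t. (?f ^^ t) (cell (0,0)) = y"
  proof
    fix y assume "y \<in> F0"
    then obtain c p where cp: "0 \<le> c" "c < n" "0 \<le> p" "p < k" "cell (c,p) = y"
      using cell_surj by (cases y) blast
    have "reach S0 (c,p)" using all_reach cp by simp
    then obtain t where t: "(nx ^^ t) S0 = (c,p)" unfolding reach_def by blast
    then have "(nx ^^ Suc t) (0,0) = (c,p)" using nx00 by (simp add: funpow_Suc_right del: funpow.simps)
    then have "(?f ^^ Suc t) (cell (0,0)) = cell (c,p)" using transfer[of "(0,0)" "Suc t"] npos gk g3 by simp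
    then show "\<exists>t. (?f ^^ t) (cell (0,0)) = y" using cp by blast
  qed
  obtain P where P: "(nx ^^ P) S0 = (0,0)" using close_cycle unfolding reach_def by blast
  then have "(nx ^^ Suc P) (0,0) = (0,0)" using nx00 by (simp add: funpow_Suc_right del: funpow.simps)
  then have per: "(?f ^^ Suc P) (cell (0,0)) = cell (0,0)" using transfer[of "(0,0)" "Suc P"] npos gk g3 by simp
  have main: "bij_betw ?f F0 F0 \<and> (\<forall>x\<in>F0. \<forall>y\<in>F0. \<exists>t. (?f ^^ t) x = y)"
    by (rule trans_from_base[OF fin cl x0 all per])
  show ?thesis unfolding is_solution_def using main by (auto simp: Rf_def Cf_def)
qed

end

theorem corollary5p6:
  fixes m g n k :: int and F :: "(int \<times> int) set"
  assumes "odd m" and "odd g" and "m \<ge> 3" and "g \<ge> 3"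
    and "n = m * g" and "k = 1 + (m - 1) * g"
    and "is_array n F" and "cyclically_k_diagonal n k F"
  shows "\<exists>R C. is_solution n F R C"
proof -
  have "2 * g \<le> (m - 1) * g" using assms(3,4) by (intro mult_right_mono) auto
  then have gk: "2*g+1 \<le> k" using assms(6) by simp
  have "even (m - 1)" using assms(1) by simp
  then have "even ((m - 1) * g)" by simp
  then have ok: "odd k" using assms(6) by simp
  have nkg: "n = k + g - 1" using assms(5,6) by (simp add: algebra_simps)
  interpret ckd n g k using assms(2,4) gk ok nkg by unfold_locales auto
  have "F = F0" using assms(8) unfolding cyclically_k_diagonal_def F0_def by simp
  then show ?thesis using solution by blast
qed

end
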